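(* Let $p=p(n)$ be a sequence of probabilities and $k\ge1$ a fixed integer. Suppose \[p\ge\frac{\log(n)+(2/k)\log(\log(n))+\omega(n)}{n}\] for some $\omega(n)\to+\infty$, and suppose that either $k\ge2$, or $n(1-p)\to0$, or $n(1-p)\to\infty$. Then a.a.s. $\Gamma\in G(n,p)$ has no star $k$-separations.
   Context: $G(n,p)$ is the Erdős–Rényi random graph on vertex set $V$, $|V|=n$, with each edge present independently with probability $p$; a.a.s. means with probability tending to $1$; $\log$ is natural logarithm. For a graph $\Delta$ with vertex set $W$, a separation of $\Delta$ is a subset $S\subset W$ with $S\ne\varnothing$, $S\ne W$, and no edges between $S$ and $W\setminus S$. $\mathrm{st}(a)$ is $a$ together with its neighbours. A star separation of $\Gamma$ is a pair $(a,S)$ with $a\in V$, $S\subset V\setminus\mathrm{st}(a)$, such that $S$ is a separation of the full subgraph $\Gamma\setminus\mathrm{st}(a)$; it is a star $k$-separation if $|S|=k$. *)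

theory Defs
  imports Complex_Main
begin

text \<open>Graphs on the vertex set V = {0..<n} are represented by their edge sets,
  i.e. sets of 2-element subsets of {0..<n}.\<close>

definition all_edges :: "nat \<Rightarrow> nat set set" where
  "all_edges n = {e. \<exists>a b. a < n \<and> b < n \<and> a \<noteq> b \<and> e = {a, b}}"

definition gnp_prob :: "nat \<Rightarrow> real \<Rightarrow> (nat set set \<Rightarrow> bool) \<Rightarrow> real" where
  "gnp_prob n p P = (\<Sum>E\<in>{E. E \<subseteq> all_edges n \<and> P E}.
      p ^ card E * (1 - p) ^ (card (all_edges n) - card E))"

definition star :: "nat set set \<Rightarrow> nat \<Rightarrow> nat set" where
  "star E a = insert a {b. {a, b} \<in> E}"

text \<open>S is a separation of the full subgraph of E on W.\<close>
definition is_separation :: "nat set set \<Rightarrow> nat set \<Rightarrow> nat set \<Rightarrow> bool" where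
  "is_separation E W S \<longleftrightarrow> S \<subseteq> W \<and> S \<noteq> {} \<and> S \<noteq> W \<and>
     (\<forall>x\<in>S. \<forall>y\<in>W - S. {x, y} \<notin> E)"

definition star_separation :: "nat \<Rightarrow> nat set set \<Rightarrow> nat \<Rightarrow> nat set \<Rightarrow> bool" where
  "star_separation n E a S \<longleftrightarrow> a < n \<and> S \<subseteq> {0..<n} - star E a \<and>
     is_separation E ({0..<n} - star E a) S"

definition star_k_separation :: "nat \<Rightarrow> nat \<Rightarrow> nat set set \<Rightarrow> nat \<Rightarrow> nat set \<Rightarrow> bool" where
  "star_k_separation n k E a S \<longleftrightarrow> star_separation n E a S \<and> card S = k"

end

theory Submission imports Defs "HOL-Real_Asymp.Real_Asymp" begin







definition mu :: "real \<Rightarrow> 'a set \<Rightarrow> ('a set \<Rightarrow> bool) \<Rightarrow> real" where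
  "mu p B Q = (\<Sum>F\<in>{F. F \<subseteq> B \<and> Q F}. p ^ card F * (1-p) ^ (card B - card F))"

lemma mu_cong: "(\<And>F. F \<subseteq> B \<Longrightarrow> Q F = Q' F) \<Longrightarrow> mu p B Q = mu p B Q'"
  unfolding mu_def by (rule sum.cong) auto

lemma mu_split:
  assumes f1: "finite B1" and f2: "finite B2" and d: "B1 \<inter> B2 = {}"
  shows "mu p (B1 \<union> B2) (\<lambda>F. Q1 (F \<inter> B1) \<and> Q2 (F \<inter> B2)) = mu p B1 Q1 * mu p B2 Q2"
proof -
  let ?X1 = "{F. F \<subseteq> B1 \<and> Q1 F}" and ?X2 = "{F. F \<subseteq> B2 \<and> Q2 F}"
  have fin1: "finite ?X1" using f1 by (simp add: finite_subset[of _ "Pow B1"] subset_iff)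
  have fin2: "finite ?X2" using f2 by (simp add: finite_subset[of _ "Pow B2"] subset_iff)
  have "mu p B1 Q1 * mu p B2 Q2 =
     (\<Sum>z\<in>?X1 \<times> ?X2. (p ^ card (fst z) * (1-p) ^ (card B1 - card (fst z))) *
        (p ^ card (snd z) * (1-p) ^ (card B2 - card (snd z))))"
    unfolding mu_def sum_product sum.cartesian_product by (simp add: case_prod_beta)
  also have "\<dots> = mu p (B1 \<union> B2) (\<lambda>F. Q1 (F \<inter> B1) \<and> Q2 (F \<inter> B2))"
    unfolding mu_def
  proof (rule sum.reindex_bij_witness[of _ "\<lambda>F. (F \<inter> B1, F \<inter> B2)" "\<lambda>z. fst z \<union> snd z"])
    fix z assume z: "z \<in> ?X1 \<times> ?X2"
    then have s1: "fst z \<subseteq> B1" and s2: "snd z \<subseteq> B2" by auto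
    show "((fst z \<union> snd z) \<inter> B1, (fst z \<union> snd z) \<inter> B2) = z" using s1 s2 d
      by (cases z) auto
    show "fst z \<union> snd z \<in> {F. F \<subseteq> B1 \<union> B2 \<and> Q1 (F \<inter> B1) \<and> Q2 (F \<inter> B2)}"
    proof -
      have "(fst z \<union> snd z) \<inter> B1 = fst z" "(fst z \<union> snd z) \<inter> B2 = snd z" using s1 s2 d by auto
      then show ?thesis using z by auto
    qed
    have fa: "finite (fst z)" "finite (snd z)" using s1 s2 f1 f2 finite_subset by auto
    have cu: "card (fst z \<union> snd z) = card (fst z) + card (snd z)"
      using fa s1 s2 d by (intro card_Un_disjoint) auto
    have cB: "card (B1 \<union> B2) = card B1 + card B2" using f1 f2 d by (intro card_Un_disjoint) auto
    have le1: "card (fst z) \<le> card B1" using s1 f1 card_mono by auto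
    have le2: "card (snd z) \<le> card B2" using s2 f2 card_mono by auto
    show "p ^ card (fst z \<union> snd z) * (1 - p) ^ (card (B1 \<union> B2) - card (fst z \<union> snd z)) =
      p ^ card (fst z) * (1 - p) ^ (card B1 - card (fst z)) * (p ^ card (snd z) * (1 - p) ^ (card B2 - card (snd z)))"
    proof -
      have "card (B1 \<union> B2) - card (fst z \<union> snd z) = (card B1 - card (fst z)) + (card B2 - card (snd z))"
        using cu cB le1 le2 by simp
      then show ?thesis using cu by (simp add: power_add)
    qed
  next
    fix F assume F: "F \<in> {F. F \<subseteq> B1 \<union> B2 \<and> Q1 (F \<inter> B1) \<and> Q2 (F \<inter> B2)}"
    then show "fst (F \<inter> B1, F \<inter> B2) \<union> snd (F \<inter> B1, F \<inter> B2) = F" by auto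
    show "(F \<inter> B1, F \<inter> B2) \<in> ?X1 \<times> ?X2" using F by auto
  qed
  finally show ?thesis by simp
qed

lemma mu_true: "finite B \<Longrightarrow> mu p B (\<lambda>_. True) = 1"
proof (induction B rule: finite_induct)
  case empty
  then show ?case by (simp add: mu_def)
next
  case (insert x B)
  have s: "{F. F \<subseteq> {x}} = {{}, {x}}" by auto
  have m1: "mu p {x} (\<lambda>_. True) = 1" unfolding mu_def using s by simp
  have "mu p (insert x B) (\<lambda>_. True) = mu p ({x} \<union> B) (\<lambda>F. True \<and> True)" by simp
  also have "\<dots> = mu p {x} (\<lambda>_. True) * mu p B (\<lambda>_. True)"
    using mu_split[of "{x}" B p "\<lambda>_. True" "\<lambda>_. True"] insert by simp
  finally show ?case using m1 insert by simp
qed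

lemma mu_blocks:
  assumes "finite I"
  shows "finite B \<Longrightarrow> (\<forall>i\<in>I. Bl i \<subseteq> B) \<Longrightarrow> (\<forall>i\<in>I. \<forall>j\<in>I. i \<noteq> j \<longrightarrow> Bl i \<inter> Bl j = {}) \<Longrightarrow>
    mu p B (\<lambda>F. \<forall>i\<in>I. Q i (F \<inter> Bl i)) = (\<Prod>i\<in>I. mu p (Bl i) (Q i))"
  using assms
proof (induction I arbitrary: B rule: finite_induct)
  case empty
  then show ?case using mu_true by simp
next
  case (insert j I)
  let ?R = "\<lambda>G. \<forall>i\<in>I. Q i (G \<inter> Bl i)"
  have sub: "\<forall>i\<in>I. Bl i \<subseteq> B - Bl j"
  proof
    fix i assume i: "i \<in> I"
    then have "i \<noteq> j" using insert.hyps by auto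
    then have "Bl i \<inter> Bl j = {}" using insert.prems(3) i by auto
    moreover have "Bl i \<subseteq> B" using insert.prems(2) i by auto
    ultimately show "Bl i \<subseteq> B - Bl j" by blast
  qed
  have "mu p B (\<lambda>F. \<forall>i\<in>insert j I. Q i (F \<inter> Bl i)) =
        mu p (Bl j \<union> (B - Bl j)) (\<lambda>F. Q j (F \<inter> Bl j) \<and> ?R (F \<inter> (B - Bl j)))"
  proof -
    have "Bl j \<union> (B - Bl j) = B" using insert.prems by auto
    moreover have "\<And>F. (\<forall>i\<in>insert j I. Q i (F \<inter> Bl i)) = (Q j (F \<inter> Bl j) \<and> ?R (F \<inter> (B - Bl j)))"
    proof -
      fix F
      have "\<forall>i\<in>I. F \<inter> (B - Bl j) \<inter> Bl i = F \<inter> Bl i" using sub by blast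
      then show "(\<forall>i\<in>insert j I. Q i (F \<inter> Bl i)) = (Q j (F \<inter> Bl j) \<and> ?R (F \<inter> (B - Bl j)))" by auto
    qed
    ultimately show ?thesis by simp
  qed
  also have "\<dots> = mu p (Bl j) (Q j) * mu p (B - Bl j) ?R"
    using insert.prems by (intro mu_split) (auto intro: finite_subset)
  also have "mu p (B - Bl j) ?R = (\<Prod>i\<in>I. mu p (Bl i) (Q i))"
    using insert.prems insert.IH[of "B - Bl j"] sub by auto
  finally show ?case using insert.hyps by simp
qed

lemma mu_empty_event: "finite B \<Longrightarrow> mu p B (\<lambda>F. F = {}) = (1-p) ^ card B"
proof -
  have "{F. F \<subseteq> B \<and> F = {}} = {{}}" by auto
  then show "mu p B (\<lambda>F. F = {}) = (1-p) ^ card B" unfolding mu_def by simp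
qed

lemma mu_mem:
  assumes "finite B" "e \<in> B"
  shows "mu p B (\<lambda>F. e \<in> F) = p"
proof -
  have eq: "{e} \<union> (B - {e}) = B" using assms by auto
  have "mu p B (\<lambda>F. e \<in> F) = mu p ({e} \<union> (B - {e})) (\<lambda>F. (e \<in> F \<inter> {e}) \<and> True)"
    unfolding eq by (rule mu_cong) auto
  also have "\<dots> = mu p {e} (\<lambda>G. e \<in> G) * mu p (B - {e}) (\<lambda>_. True)"
    using assms by (intro mu_split) auto
  also have "mu p {e} (\<lambda>G. e \<in> G) = p"
  proof -
    have "{F. F \<subseteq> {e} \<and> e \<in> F} = {{e}}" by auto
    then show ?thesis unfolding mu_def by simp
  qed
  finally show ?thesis using mu_true[of "B - {e}" p] assms by simp
qed

lemma mu_fin: "finite B \<Longrightarrow> finite {F. F \<subseteq> B \<and> Q F}"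
  by (rule finite_subset[of _ "Pow B"]) auto

lemma mu_disj:
  assumes "finite B" "\<And>F. \<not> (P F \<and> Q F)"
  shows "mu p B (\<lambda>F. P F \<or> Q F) = mu p B P + mu p B Q"
proof -
  have "{F. F \<subseteq> B \<and> (P F \<or> Q F)} = {F. F \<subseteq> B \<and> P F} \<union> {F. F \<subseteq> B \<and> Q F}" by auto
  then show ?thesis unfolding mu_def using assms
    by (simp add: sum.union_disjoint mu_fin disjoint_iff)
qed

lemma mu_diff:
  assumes "finite B"
  shows "mu p B (\<lambda>F. P F \<and> \<not> Q F) = mu p B P - mu p B (\<lambda>F. P F \<and> Q F)"
proof -
  have "mu p B P = mu p B (\<lambda>F. (P F \<and> \<not> Q F) \<or> (P F \<and> Q F))" by (rule mu_cong) auto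
  also have "\<dots> = mu p B (\<lambda>F. P F \<and> \<not> Q F) + mu p B (\<lambda>F. P F \<and> Q F)"
    using assms by (intro mu_disj) auto
  finally show ?thesis by simp
qed

lemma mu_nonneg: "0 \<le> p \<Longrightarrow> p \<le> 1 \<Longrightarrow> 0 \<le> mu p B Q"
  unfolding mu_def by (intro sum_nonneg) auto

lemma mu_mono:
  assumes "finite B" "0 \<le> p" "p \<le> 1" "\<And>F. F \<subseteq> B \<Longrightarrow> P F \<Longrightarrow> Q F"
  shows "mu p B P \<le> mu p B Q"
  unfolding mu_def using assms by (intro sum_mono2 mu_fin) auto

lemma mu_or_le:
  assumes "finite B" "0 \<le> p" "p \<le> 1"
  shows "mu p B (\<lambda>F. P F \<or> Q F) \<le> mu p B P + mu p B Q"
proof -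
  have "mu p B (\<lambda>F. P F \<or> Q F) = mu p B (\<lambda>F. P F \<or> (Q F \<and> \<not> P F))" by (rule mu_cong) auto
  also have "\<dots> = mu p B P + mu p B (\<lambda>F. Q F \<and> \<not> P F)" using assms by (intro mu_disj) auto
  also have "mu p B (\<lambda>F. Q F \<and> \<not> P F) \<le> mu p B Q" using assms by (intro mu_mono) auto
  finally show ?thesis by simp
qed

lemma mu_union_bound:
  assumes "finite I" "finite B" "0 \<le> p" "p \<le> 1"
  shows "mu p B (\<lambda>F. \<exists>i\<in>I. P i F) \<le> (\<Sum>i\<in>I. mu p B (P i))"
  using assms(1)
proof (induction I rule: finite_induct)
  case empty
  have "mu p B (\<lambda>F. False) = 0" unfolding mu_def by simp
  then show ?case by simp
next
  case (insert j I)
  have "mu p B (\<lambda>F. \<exists>i\<in>insert j I. P i F) = mu p B (\<lambda>F. P j F \<or> (\<exists>i\<in>I. P i F))" by (rule mu_cong) auto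
  also have "\<dots> \<le> mu p B (P j) + mu p B (\<lambda>F. \<exists>i\<in>I. P i F)" using assms by (intro mu_or_le) auto
  also have "\<dots> \<le> mu p B (P j) + (\<Sum>i\<in>I. mu p B (P i))" using insert.IH by simp
  finally show ?case using insert.hyps by simp
qed


definition blk0 :: "nat set \<Rightarrow> nat \<Rightarrow> nat set set" where
  "blk0 S i = (\<lambda>s. {i, s}) ` S"

definition blk :: "nat set \<Rightarrow> nat \<Rightarrow> nat \<Rightarrow> nat set set" where
  "blk S a i = (if i = a then blk0 S a else insert {i, a} (blk0 S i))"

lemma finite_all_edges: "finite (all_edges n)"
proof -
  have "all_edges n \<subseteq> Pow {0..<n}" unfolding all_edges_def by auto
  then show ?thesis by (rule finite_subset) auto
qed

lemma blk0_sub: "S \<subseteq> {0..<n} \<Longrightarrow> i \<in> {0..<n} - S \<Longrightarrow> blk0 S i \<subseteq> all_edges n"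
  unfolding blk0_def all_edges_def by fastforce

lemma blk_sub: "S \<subseteq> {0..<n} \<Longrightarrow> a \<in> {0..<n} - S \<Longrightarrow> i \<in> {0..<n} - S \<Longrightarrow> blk S a i \<subseteq> all_edges n"
  unfolding blk_def using blk0_sub[of S n] by (auto simp: all_edges_def)

lemma blk0_disj: "i \<notin> S \<Longrightarrow> j \<notin> S \<Longrightarrow> i \<noteq> j \<Longrightarrow> blk0 S i \<inter> blk0 S j = {}"
  unfolding blk0_def by (auto simp: doubleton_eq_iff)

lemma blk_disj: "a \<notin> S \<Longrightarrow> i \<notin> S \<Longrightarrow> j \<notin> S \<Longrightarrow> i \<noteq> j \<Longrightarrow> blk S a i \<inter> blk S a j = {}"
  unfolding blk_def blk0_def by (auto simp: doubleton_eq_iff)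

lemma card_blk0: "finite S \<Longrightarrow> i \<notin> S \<Longrightarrow> card (blk0 S i) = card S"
  unfolding blk0_def by (rule card_image) (auto simp: inj_on_def doubleton_eq_iff)

lemma card_blk: "finite S \<Longrightarrow> a \<notin> S \<Longrightarrow> i \<notin> S \<Longrightarrow> i \<noteq> a \<Longrightarrow> card (blk S a i) = card S + 1"
proof -
  assume "finite S" "a \<notin> S" "i \<notin> S" "i \<noteq> a"
  moreover have "{i, a} \<notin> blk0 S i" using \<open>a \<notin> S\<close> \<open>i \<noteq> a\<close> unfolding blk0_def by (auto simp: doubleton_eq_iff)
  ultimately show ?thesis unfolding blk_def using card_blk0 by (simp add: blk0_def)
qed

lemma finite_blk0: "finite S \<Longrightarrow> finite (blk0 S i)"
  unfolding blk0_def by auto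

lemma finite_blk: "finite S \<Longrightarrow> finite (blk S a i)"
  unfolding blk_def blk0_def by auto

lemma mu_blk_or:
  assumes "finite S" "a \<notin> S" "i \<notin> S" "i \<noteq> a"
  shows "mu p (blk S a i) (\<lambda>F. {i, a} \<in> F \<or> F = {}) = p + (1-p) ^ (card S + 1)"
proof -
  have "mu p (blk S a i) (\<lambda>F. {i, a} \<in> F \<or> F = {}) = mu p (blk S a i) (\<lambda>F. {i, a} \<in> F) + mu p (blk S a i) (\<lambda>F. F = {})"
    using assms finite_blk by (intro mu_disj) auto
  also have "\<dots> = p + (1-p) ^ (card S + 1)"
  proof -
    have "{i, a} \<in> blk S a i" using assms unfolding blk_def by auto
    then have "mu p (blk S a i) (\<lambda>F. {i, a} \<in> F) = p" using mu_mem[OF finite_blk[OF assms(1)]] by blast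
    moreover have "mu p (blk S a i) (\<lambda>F. F = {}) = (1-p) ^ (card S + 1)"
      using assms by (simp add: mu_empty_event finite_blk card_blk del: power_Suc)
    ultimately show ?thesis by simp
  qed
  finally show ?thesis .
qed

definition QA :: "nat \<Rightarrow> nat \<Rightarrow> nat set set \<Rightarrow> bool" where
  "QA a i F = (if i = a then F = {} else ({i, a} \<in> F \<or> F = {}))"

definition Q2 :: "nat \<Rightarrow> nat \<Rightarrow> nat \<Rightarrow> nat set set \<Rightarrow> bool" where
  "Q2 a v i F = (if i = a \<or> i = v then F = {} else ({i, a} \<in> F \<or> F = {}))"

definition evC :: "nat \<Rightarrow> nat set \<Rightarrow> nat set set \<Rightarrow> bool" where
  "evC n S E = (\<forall>i\<in>{0..<n} - S. E \<inter> blk0 S i = {})"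

definition evAB :: "nat \<Rightarrow> nat set \<Rightarrow> nat \<Rightarrow> nat set set \<Rightarrow> bool" where
  "evAB n S a E = (\<forall>i\<in>{0..<n} - S. QA a i (E \<inter> blk S a i))"

definition ev2 :: "nat \<Rightarrow> nat set \<Rightarrow> nat \<Rightarrow> nat \<Rightarrow> nat set set \<Rightarrow> bool" where
  "ev2 n S a v E = (\<forall>i\<in>{0..<n} - S. Q2 a v i (E \<inter> blk S a i))"

lemma star_imp:
  assumes "star_k_separation n k E a S"
  shows "S \<subseteq> {0..<n}" "card S = k" "a \<in> {0..<n} - S" "evAB n S a E"
    "\<exists>v\<in>{0..<n} - S - {a}. ev2 n S a v E"
proof -
  let ?W = "{0..<n} - star E a"
  have a: "a < n" and SW: "S \<subseteq> ?W" and ne: "S \<noteq> ?W" and sep: "\<forall>x\<in>S. \<forall>y\<in>?W - S. {x, y} \<notin> E"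
    and c: "card S = k"
    using assms unfolding star_k_separation_def star_separation_def is_separation_def by auto
  show "S \<subseteq> {0..<n}" using SW by auto
  show "card S = k" by fact
  have aS: "a \<notin> S" using SW unfolding star_def by auto
  show "a \<in> {0..<n} - S" using a aS by auto
  have f1: "\<forall>s\<in>S. {a, s} \<notin> E" using SW unfolding star_def by auto
  have f2: "\<forall>w\<in>{0..<n} - S - {a}. {w, a} \<in> E \<or> (\<forall>s\<in>S. {w, s} \<notin> E)"
  proof
    fix w assume w: "w \<in> {0..<n} - S - {a}"
    show "{w, a} \<in> E \<or> (\<forall>s\<in>S. {w, s} \<notin> E)"
    proof (cases "{w, a} \<in> E")
      case False
      then have "w \<in> ?W - S" using w unfolding star_def by (auto simp: insert_commute)
      then show ?thesis using sep by (auto simp: insert_commute)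
    qed simp
  qed
  obtain v where v: "v \<in> ?W - S" using SW ne by blast
  have v2: "v \<in> {0..<n} - S - {a}" "{v, a} \<notin> E" using v unfolding star_def by (auto simp: insert_commute)
  have blkA: "E \<inter> blk S a a = {}" using f1 unfolding blk_def blk0_def by auto
  have blkW: "{i, a} \<in> E \<or> E \<inter> blk S a i = {}" if "i \<in> {0..<n} - S - {a}" for i
    using f2 that unfolding blk_def blk0_def by auto
  show "evAB n S a E" unfolding evAB_def QA_def
  proof
    fix i assume i: "i \<in> {0..<n} - S"
    show "if i = a then E \<inter> blk S a i = {} else {i, a} \<in> E \<inter> blk S a i \<or> E \<inter> blk S a i = {}"
      using blkA blkW[of i] i unfolding blk_def by auto
  qed
  have "ev2 n S a v E" unfolding ev2_def Q2_def
  proof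
    fix i assume i: "i \<in> {0..<n} - S"
    show "if i = a \<or> i = v then E \<inter> blk S a i = {} else {i, a} \<in> E \<inter> blk S a i \<or> E \<inter> blk S a i = {}"
      using blkA blkW[of i] blkW[of v] v2 i unfolding blk_def by auto
  qed
  then show "\<exists>v\<in>{0..<n} - S - {a}. ev2 n S a v E" using v2 by blast
qed

lemma evC_imp: "a \<in> {0..<n} - S \<Longrightarrow> evC n S E \<Longrightarrow> evAB n S a E"
  unfolding evC_def evAB_def QA_def blk_def by auto


lemma prob_evC:
  assumes "S \<subseteq> {0..<n}" "card S = k"
  shows "mu p (all_edges n) (evC n S) = (1-p) ^ (k * (n - k))"
proof -
  have fS: "finite S" using assms finite_subset by blast
  have "mu p (all_edges n) (evC n S) = mu p (all_edges n) (\<lambda>F. \<forall>i\<in>{0..<n} - S. (\<lambda>i G. G = {}) i (F \<inter> blk0 S i))"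
    unfolding evC_def by simp
  also have "\<dots> = (\<Prod>i\<in>{0..<n} - S. mu p (blk0 S i) (\<lambda>G. G = {}))"
  proof (rule mu_blocks)
    show "\<forall>i\<in>{0..<n} - S. blk0 S i \<subseteq> all_edges n" using assms blk0_sub[of S n] by blast
    show "\<forall>i\<in>{0..<n} - S. \<forall>j\<in>{0..<n} - S. i \<noteq> j \<longrightarrow> blk0 S i \<inter> blk0 S j = {}" using blk0_disj[of _ S] by blast
  qed (auto simp: finite_all_edges)
  also have "\<dots> = (\<Prod>i\<in>{0..<n} - S. (1-p) ^ k)"
    using fS assms by (intro prod.cong) (auto simp: mu_empty_event card_blk0 finite_blk0)
  also have "\<dots> = (1-p) ^ (k * (n - k))"
    using assms fS by (simp add: card_Diff_subset power_mult)
  finally show ?thesis .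
qed

lemma prob_evAB:
  assumes "S \<subseteq> {0..<n}" "card S = k" "a \<in> {0..<n} - S"
  shows "mu p (all_edges n) (evAB n S a) = (1-p) ^ k * (p + (1-p) ^ (k+1)) ^ (n - k - 1)"
proof -
  have fS: "finite S" using assms finite_subset by blast
  have "mu p (all_edges n) (evAB n S a) = (\<Prod>i\<in>{0..<n} - S. mu p (blk S a i) (QA a i))"
    unfolding evAB_def
  proof (rule mu_blocks)
    show "\<forall>i\<in>{0..<n} - S. blk S a i \<subseteq> all_edges n" using assms blk_sub[of S n a] by blast
    show "\<forall>i\<in>{0..<n} - S. \<forall>j\<in>{0..<n} - S. i \<noteq> j \<longrightarrow> blk S a i \<inter> blk S a j = {}" using assms blk_disj[of a S] by blast
  qed (auto simp: finite_all_edges)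
  also have "\<dots> = mu p (blk S a a) (QA a a) * (\<Prod>i\<in>{0..<n} - S - {a}. mu p (blk S a i) (QA a i))"
    using assms by (simp add: prod.remove)
  also have "(\<Prod>i\<in>{0..<n} - S - {a}. mu p (blk S a i) (QA a i)) = (\<Prod>i\<in>{0..<n} - S - {a}. p + (1-p) ^ (k+1))"
  proof (rule prod.cong)
    fix i assume i: "i \<in> {0..<n} - S - {a}"
    then have "QA a i = (\<lambda>F. {i, a} \<in> F \<or> F = {})" by (auto simp: QA_def fun_eq_iff)
    then show "mu p (blk S a i) (QA a i) = p + (1-p) ^ (k+1)"
      using mu_blk_or[of S a i p] fS assms i by (simp del: power_Suc)
  qed simp
  also have "mu p (blk S a a) (QA a a) = (1-p) ^ k"
  proof -
    have "mu p (blk S a a) (QA a a) = mu p (blk0 S a) (\<lambda>F. F = {})" unfolding blk_def if_P[OF refl] by (rule mu_cong) (simp add: QA_def)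
    then show ?thesis using fS assms by (simp add: mu_empty_event card_blk0 finite_blk0)
  qed
  finally have eq: "mu p (all_edges n) (evAB n S a) = (1-p) ^ k * (\<Prod>i\<in>{0..<n} - S - {a}. p + (1-p) ^ (k+1))" .
  have "card ({0..<n} - S - {a}) = n - k - 1"
    using assms fS by (simp add: card_Diff_subset)
  then show ?thesis using eq by simp
qed

lemma prob_ev2:
  assumes "S \<subseteq> {0..<n}" "card S = k" "a \<in> {0..<n} - S" "v \<in> {0..<n} - S - {a}"
  shows "mu p (all_edges n) (ev2 n S a v) = (1-p) ^ k * (1-p) ^ (k+1) * (p + (1-p) ^ (k+1)) ^ (n - k - 2)"
proof -
  have fS: "finite S" using assms finite_subset by blast
  have "mu p (all_edges n) (ev2 n S a v) = (\<Prod>i\<in>{0..<n} - S. mu p (blk S a i) (Q2 a v i))"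
    unfolding ev2_def
  proof (rule mu_blocks)
    show "\<forall>i\<in>{0..<n} - S. blk S a i \<subseteq> all_edges n" using assms blk_sub[of S n a] by blast
    show "\<forall>i\<in>{0..<n} - S. \<forall>j\<in>{0..<n} - S. i \<noteq> j \<longrightarrow> blk S a i \<inter> blk S a j = {}" using assms blk_disj[of a S] by blast
  qed (auto simp: finite_all_edges)
  also have "\<dots> = mu p (blk S a a) (Q2 a v a) * (\<Prod>i\<in>{0..<n} - S - {a}. mu p (blk S a i) (Q2 a v i))"
    using assms by (simp add: prod.remove)
  also have "(\<Prod>i\<in>{0..<n} - S - {a}. mu p (blk S a i) (Q2 a v i)) =
      mu p (blk S a v) (Q2 a v v) * (\<Prod>i\<in>{0..<n} - S - {a} - {v}. mu p (blk S a i) (Q2 a v i))"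
    using assms by (simp add: prod.remove)
  also have "(\<Prod>i\<in>{0..<n} - S - {a} - {v}. mu p (blk S a i) (Q2 a v i)) = (\<Prod>i\<in>{0..<n} - S - {a} - {v}. p + (1-p) ^ (k+1))"
  proof (rule prod.cong)
    fix i assume i: "i \<in> {0..<n} - S - {a} - {v}"
    then have "Q2 a v i = (\<lambda>F. {i, a} \<in> F \<or> F = {})" by (auto simp: Q2_def fun_eq_iff)
    then show "mu p (blk S a i) (Q2 a v i) = p + (1-p) ^ (k+1)"
      using mu_blk_or[of S a i p] fS assms i by (simp del: power_Suc)
  qed simp
  also have "mu p (blk S a a) (Q2 a v a) = (1-p) ^ k"
  proof -
    have "mu p (blk S a a) (Q2 a v a) = mu p (blk0 S a) (\<lambda>F. F = {})" unfolding blk_def if_P[OF refl] by (rule mu_cong) (simp add: Q2_def)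
    then show ?thesis using fS assms by (simp add: mu_empty_event card_blk0 finite_blk0)
  qed
  also have "mu p (blk S a v) (Q2 a v v) = (1-p) ^ (k+1)"
  proof -
    have "mu p (blk S a v) (Q2 a v v) = mu p (blk S a v) (\<lambda>F. F = {})" by (rule mu_cong) (simp add: Q2_def)
    also have "\<dots> = (1-p) ^ (k+1)" using fS assms by (simp add: mu_empty_event finite_blk card_blk del: power_Suc)
    finally show ?thesis .
  qed
  finally have eq: "mu p (all_edges n) (ev2 n S a v) = (1-p) ^ k * ((1-p) ^ (k+1) * (\<Prod>i\<in>{0..<n} - S - {a} - {v}. p + (1-p) ^ (k+1)))" .
  have "card ({0..<n} - S - {a} - {v}) = n - k - 2"
    using assms fS by (simp add: card_Diff_subset)
  then show ?thesis using eq by simp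
qed


lemma gnp_mu: "gnp_prob n p P = mu p (all_edges n) P"
  unfolding gnp_prob_def mu_def by simp

lemma KS_fin: "finite {S. S \<subseteq> {0..<(n::nat)} \<and> card S = k}"
  by (rule finite_subset[of _ "Pow {0..<n}"]) auto

lemma KS_card: "card {S. S \<subseteq> {0..<(n::nat)} \<and> card S = k} = n choose k"
  using n_subsets[of "{0..<n}" k] by simp

lemma card_VS: "S \<subseteq> {0..<n} \<Longrightarrow> card S = k \<Longrightarrow> card ({0..<n} - S) = n - k"
  by (simp add: card_Diff_subset finite_subset)

lemma card_VSa: "S \<subseteq> {0..<n} \<Longrightarrow> card S = k \<Longrightarrow> a \<in> {0..<n} - S \<Longrightarrow> card ({0..<n} - S - {a}) = n - k - 1"
  using card_VS[of S n k] by (simp add: finite_subset)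

lemma bound1:
  assumes p: "0 \<le> p" "p \<le> 1"
  shows "gnp_prob n p (\<lambda>E. \<exists>a S. star_k_separation n k E a S) \<le>
    real (n choose k) * ((1-p) ^ (k * (n - k)) +
      real (n - k) * ((1-p) ^ k * (p + (1-p) ^ (k+1)) ^ (n - k - 1) - (1-p) ^ (k * (n - k))))"
proof -
  let ?KS = "{S. S \<subseteq> {0..<n} \<and> card S = k}"
  let ?A = "all_edges n"
  let ?qC = "(1-p) ^ (k * (n - k))" and ?qAB = "(1-p) ^ k * (p + (1-p) ^ (k+1)) ^ (n - k - 1)"
  have "gnp_prob n p (\<lambda>E. \<exists>a S. star_k_separation n k E a S) =
        mu p ?A (\<lambda>E. \<exists>a S. star_k_separation n k E a S)" by (rule gnp_mu)
  also have "\<dots> \<le> mu p ?A (\<lambda>E. \<exists>S\<in>?KS. evC n S E \<or> (\<exists>a\<in>{0..<n} - S. evAB n S a E \<and> \<not> evC n S E))"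
  proof (rule mu_mono[OF finite_all_edges p])
    fix E assume "\<exists>a S. star_k_separation n k E a S"
    then obtain a S where st: "star_k_separation n k E a S" by blast
    show "\<exists>S\<in>?KS. evC n S E \<or> (\<exists>a\<in>{0..<n} - S. evAB n S a E \<and> \<not> evC n S E)"
      using star_imp[OF st] by blast
  qed
  also have "\<dots> \<le> (\<Sum>S\<in>?KS. mu p ?A (\<lambda>E. evC n S E \<or> (\<exists>a\<in>{0..<n} - S. evAB n S a E \<and> \<not> evC n S E)))"
    by (rule mu_union_bound[OF KS_fin finite_all_edges p])
  also have "\<dots> \<le> (\<Sum>S\<in>?KS. ?qC + real (n - k) * (?qAB - ?qC))"
  proof (rule sum_mono)
    fix S assume S: "S \<in> ?KS"
    have "mu p ?A (\<lambda>E. evC n S E \<or> (\<exists>a\<in>{0..<n} - S. evAB n S a E \<and> \<not> evC n S E)) \<le>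
       mu p ?A (evC n S) + mu p ?A (\<lambda>E. \<exists>a\<in>{0..<n} - S. evAB n S a E \<and> \<not> evC n S E)"
      by (rule mu_or_le[OF finite_all_edges p])
    also have "mu p ?A (\<lambda>E. \<exists>a\<in>{0..<n} - S. evAB n S a E \<and> \<not> evC n S E) \<le>
        (\<Sum>a\<in>{0..<n} - S. mu p ?A (\<lambda>E. evAB n S a E \<and> \<not> evC n S E))"
      by (rule mu_union_bound[OF _ finite_all_edges p]) simp
    also have "\<dots> = (\<Sum>a\<in>{0..<n} - S. ?qAB - ?qC)"
    proof (rule sum.cong[OF refl])
      fix a assume a: "a \<in> {0..<n} - S"
      have "mu p ?A (\<lambda>E. evAB n S a E \<and> \<not> evC n S E) = mu p ?A (evAB n S a) - mu p ?A (\<lambda>E. evAB n S a E \<and> evC n S E)"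
        by (rule mu_diff[OF finite_all_edges])
      also have "mu p ?A (\<lambda>E. evAB n S a E \<and> evC n S E) = mu p ?A (evC n S)"
        using evC_imp[OF a] by (intro mu_cong) auto
      finally show "mu p ?A (\<lambda>E. evAB n S a E \<and> \<not> evC n S E) = ?qAB - ?qC"
        using prob_evAB[of S n k a p] prob_evC[of S n k p] S a by simp
    qed
    also have "mu p ?A (evC n S) = ?qC" using prob_evC[of S n k p] S by simp
    also have "(\<Sum>a\<in>{0..<n} - S. ?qAB - ?qC) = real (n - k) * (?qAB - ?qC)"
      using S card_VS[of S n k] by simp
    finally show "mu p ?A (\<lambda>E. evC n S E \<or> (\<exists>a\<in>{0..<n} - S. evAB n S a E \<and> \<not> evC n S E)) \<le> ?qC + real (n - k) * (?qAB - ?qC)"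
      by simp
  qed
  also have "\<dots> = real (n choose k) * (?qC + real (n - k) * (?qAB - ?qC))"
    using KS_card[of n k] by simp
  finally show ?thesis .
qed

lemma bound2:
  assumes p: "0 \<le> p" "p \<le> 1"
  shows "gnp_prob n p (\<lambda>E. \<exists>a S. star_k_separation n k E a S) \<le>
    real (n choose k) * (real (n - k) * (real (n - k - 1) *
      ((1-p) ^ k * (1-p) ^ (k+1) * (p + (1-p) ^ (k+1)) ^ (n - k - 2))))"
proof -
  let ?KS = "{S. S \<subseteq> {0..<n} \<and> card S = k}"
  let ?A = "all_edges n"
  let ?q = "(1-p) ^ k * (1-p) ^ (k+1) * (p + (1-p) ^ (k+1)) ^ (n - k - 2)"
  have "gnp_prob n p (\<lambda>E. \<exists>a S. star_k_separation n k E a S) =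
        mu p ?A (\<lambda>E. \<exists>a S. star_k_separation n k E a S)" by (rule gnp_mu)
  also have "\<dots> \<le> mu p ?A (\<lambda>E. \<exists>S\<in>?KS. \<exists>a\<in>{0..<n} - S. \<exists>v\<in>{0..<n} - S - {a}. ev2 n S a v E)"
  proof (rule mu_mono[OF finite_all_edges p])
    fix E assume "\<exists>a S. star_k_separation n k E a S"
    then obtain a S where st: "star_k_separation n k E a S" by blast
    show "\<exists>S\<in>?KS. \<exists>a\<in>{0..<n} - S. \<exists>v\<in>{0..<n} - S - {a}. ev2 n S a v E"
      using star_imp[OF st] by blast
  qed
  also have "\<dots> \<le> (\<Sum>S\<in>?KS. mu p ?A (\<lambda>E. \<exists>a\<in>{0..<n} - S. \<exists>v\<in>{0..<n} - S - {a}. ev2 n S a v E))"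
    by (rule mu_union_bound[OF KS_fin finite_all_edges p])
  also have "\<dots> \<le> (\<Sum>S\<in>?KS. real (n - k) * (real (n - k - 1) * ?q))"
  proof (rule sum_mono)
    fix S assume S: "S \<in> ?KS"
    have "mu p ?A (\<lambda>E. \<exists>a\<in>{0..<n} - S. \<exists>v\<in>{0..<n} - S - {a}. ev2 n S a v E) \<le>
        (\<Sum>a\<in>{0..<n} - S. mu p ?A (\<lambda>E. \<exists>v\<in>{0..<n} - S - {a}. ev2 n S a v E))"
      by (rule mu_union_bound[OF _ finite_all_edges p]) simp
    also have "\<dots> \<le> (\<Sum>a\<in>{0..<n} - S. real (n - k - 1) * ?q)"
    proof (rule sum_mono)
      fix a assume a: "a \<in> {0..<n} - S"
      have "mu p ?A (\<lambda>E. \<exists>v\<in>{0..<n} - S - {a}. ev2 n S a v E) \<le> (\<Sum>v\<in>{0..<n} - S - {a}. mu p ?A (ev2 n S a v))"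
        by (rule mu_union_bound[OF _ finite_all_edges p]) simp
      also have "\<dots> = (\<Sum>v\<in>{0..<n} - S - {a}. ?q)"
        using prob_ev2[of S n k a _ p] S a by (intro sum.cong) auto
      also have "\<dots> = real (n - k - 1) * ?q"
        using S a card_VSa[of S n k a] by simp
      finally show "mu p ?A (\<lambda>E. \<exists>v\<in>{0..<n} - S - {a}. ev2 n S a v E) \<le> real (n - k - 1) * ?q" .
    qed
    also have "\<dots> = real (n - k) * (real (n - k - 1) * ?q)"
      using S card_VS[of S n k] by simp
    finally show "mu p ?A (\<lambda>E. \<exists>a\<in>{0..<n} - S. \<exists>v\<in>{0..<n} - S - {a}. ev2 n S a v E) \<le> real (n - k) * (real (n - k - 1) * ?q)" .
  qed
  also have "\<dots> = real (n choose k) * (real (n - k) * (real (n - k - 1) * ?q))"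
    using KS_card[of n k] by simp
  finally show ?thesis .
qed



lemma one_minus_le_exp: "1 - (p::real) \<le> exp (- p)"
  using exp_ge_add_one_self[of "-p"] by simp

lemma pow_le_exp: "0 \<le> (y::real) \<Longrightarrow> y \<le> exp z \<Longrightarrow> y ^ N \<le> exp (real N * z)"
  by (simp add: exp_of_nat_mult power_mono)

lemma bern_low: "0 \<le> (p::real) \<Longrightarrow> p \<le> 1 \<Longrightarrow> 1 - real k * p \<le> (1-p) ^ k"
  using Bernoulli_inequality[of "-p" k] by simp

lemma bern_up: "0 \<le> (p::real) \<Longrightarrow> p \<le> 1 \<Longrightarrow> (1-p) ^ k \<le> 1 - real k * p + (real k)^2 * p^2"
proof (induction k)
  case 0 then show ?case by simp
next
  case (Suc k)
  have "(1-p) ^ Suc k = (1-p) * (1-p)^k" by simp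
  also have "\<dots> \<le> (1-p) * (1 - real k * p + (real k)^2 * p^2)"
    using Suc by (intro mult_left_mono) auto
  also have "\<dots> = 1 - real (Suc k) * p + (real k + (real k)^2) * p^2 - (real k)^2 * p^3"
    by (simp add: algebra_simps power2_eq_square power3_eq_cube)
  also have "\<dots> \<le> 1 - real (Suc k) * p + (real (Suc k))^2 * p^2"
  proof -
    have "(real k + (real k)^2) * p^2 \<le> (real (Suc k))^2 * p^2"
      by (intro mult_right_mono) (auto simp: power2_eq_square algebra_simps)
    moreover have "0 \<le> (real k)^2 * p^3" using Suc by simp
    ultimately show ?thesis by linarith
  qed
  finally show ?case .
qed

lemma pow_diff_le:
  fixes x y :: real
  assumes "0 \<le> y" "y \<le> x"
  shows "x ^ N - y ^ N \<le> real N * (x - y) * x ^ (N - 1)"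
proof (induction N)
  case 0 then show ?case by simp
next
  case (Suc N)
  have x0: "0 \<le> x" using assms by simp
  have "x ^ Suc N - y ^ Suc N = x * (x ^ N - y ^ N) + y ^ N * (x - y)" by (simp add: algebra_simps)
  also have "\<dots> \<le> x * (real N * (x - y) * x ^ (N - 1)) + x ^ N * (x - y)"
    using Suc x0 assms by (intro add_mono mult_left_mono mult_right_mono power_mono) auto
  also have "x * (real N * (x - y) * x ^ (N - 1)) = real N * (x - y) * x ^ N"
    by (cases N) (auto simp: algebra_simps)
  finally show ?case by (simp add: algebra_simps)
qed

lemma upow_bound:
  fixes u c :: real
  assumes "0 \<le> u" "0 < c" "j \<ge> 1"
  shows "u ^ j \<le> (real j / c) ^ j * exp (c * u)"
proof -
  have jp: "real j > 0" using assms by simp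
  have "c * u / real j \<le> exp (c * u / real j)"
    using exp_ge_add_one_self[of "c * u / real j"] by linarith
  then have "u \<le> (real j / c) * exp (c * u / real j)"
    using assms jp by (simp add: field_simps)
  then have "u ^ j \<le> ((real j / c) * exp (c * u / real j)) ^ j"
    using assms by (intro power_mono) auto
  also have "\<dots> = (real j / c) ^ j * exp (c * u)"
  proof -
    have "exp (c * u / real j) ^ j = exp (real j * (c * u / real j))" by (simp only: exp_of_nat_mult)
    also have "\<dots> = exp (c * u)" using jp by simp
    finally show ?thesis by (simp only: power_mult_distrib)
  qed
  finally show ?thesis .
qed


lemma x_facts:
  fixes p :: real
  assumes "k \<ge> 1" "0 \<le> p" "p \<le> 1"
  shows "(1-p)^k \<le> p + (1-p)^(k+1)" "p + (1-p)^(k+1) \<le> 1" "0 \<le> p + (1-p)^(k+1)"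
    "p + (1-p)^(k+1) - (1-p)^k = p * (1 - (1-p)^k)"
proof -
  have q0: "0 \<le> (1-p)^k" "(1-p)^k \<le> 1" using assms by (auto intro: power_le_one)
  show e: "p + (1-p)^(k+1) - (1-p)^k = p * (1 - (1-p)^k)" by (simp add: algebra_simps)
  have "0 \<le> p * (1 - (1-p)^k)" using q0 assms by simp
  then show "(1-p)^k \<le> p + (1-p)^(k+1)" using e by linarith
  have "(1-p)^(k+1) \<le> 1 - p"
  proof -
    have "(1-p)^(k+1) = (1-p) * (1-p)^k" by simp
    also have "\<dots> \<le> (1-p) * 1" using q0 assms by (intro mult_left_mono) auto
    finally show ?thesis by simp
  qed
  then show "p + (1-p)^(k+1) \<le> 1" by simp
  show "0 \<le> p + (1-p)^(k+1)" using assms by simp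
qed

lemma R1:
  fixes p :: real and n k :: nat
  assumes k1: "k \<ge> 1" and nk: "n \<ge> k + 2" and p0: "0 \<le> p" and p1: "p \<le> 1" and np: "real n * p^2 \<le> 1"
  shows "real (n choose k) * ((1-p)^(k*(n-k)) + real (n-k) * ((1-p)^k * (p + (1-p)^(k+1))^(n-k-1) - (1-p)^(k*(n-k))))
     \<le> real n ^ k * ((exp (real k ^ 2) + real k * exp (real k * (real k + 2) + 2 * real k ^ 2) * (real n * p)^2) * exp (- real k * (real n * p)))"
proof -
  define q where "q = 1 - p"
  define x where "x = p + q^(k+1)"
  define m where "m = n - k"
  define t where "t = real n * p"
  define K where "K = exp (real k * (real k + 2) + 2 * real k ^ 2)"
  have q0: "0 \<le> q" "q \<le> 1" using p0 p1 q_def by auto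
  have qk: "0 \<le> q^k" "q^k \<le> 1" using q0 by (auto intro: power_le_one)
  have xf: "q^k \<le> x" "x \<le> 1" "0 \<le> x" "x - q^k = p * (1 - q^k)"
    using x_facts[OF k1 p0 p1] unfolding x_def q_def by auto
  have m2: "m \<ge> 2" using nk m_def by simp
  have rm: "real m = real n - real k" using nk m_def by simp
  have T1: "q^(k*m) \<le> exp (real k ^ 2) * exp (- real k * t)"
  proof -
    have "q^(k*m) \<le> exp (real (k*m) * (-p))"
      using q0 one_minus_le_exp[of p] q_def by (intro pow_le_exp) auto
    also have "real (k*m) * (-p) = - real k * t + real k * real k * p"
    proof -
      have h: "real k * real m = real k * real n - real k * real k" using rm by (simp add: right_diff_distrib)
      have h2: "p * (real k * real m) = p * (real k * real n) - p * (real k * real k)"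
        unfolding h by (simp add: right_diff_distrib)
      have "real (k*m) * (-p) = - (p * (real k * real m))" by simp
      then show ?thesis unfolding t_def using h2 by (simp add: algebra_simps)
    qed
    also have "exp (- real k * t + real k * real k * p) \<le> exp (- real k * t + real k ^ 2)"
    proof -
      have "real k * real k * p \<le> real k * real k * 1" using p1 by (intro mult_left_mono) auto
      then show ?thesis by (simp add: power2_eq_square)
    qed
    also have "\<dots> = exp (real k ^ 2) * exp (- real k * t)" by (simp add: exp_add[symmetric] add.commute)
    finally show ?thesis .
  qed
  have qkm: "q^(k*m) = q^k * (q^k)^(m-1)"
  proof -
    have "k * m = k + k * (m - 1)" using m2 by (cases m) auto
    then show ?thesis by (simp add: power_add power_mult)
  qed
  have "real m * (q^k * x^(m-1) - q^(k*m)) = real m * q^k * (x^(m-1) - (q^k)^(m-1))"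
    using qkm by (simp add: algebra_simps)
  also have "\<dots> \<le> real m * 1 * (real (m-1) * (x - q^k) * x^(m-1-1))"
    using pow_diff_le[of "q^k" x "m-1"] xf qk power_mono[of "q^k" x "m-1"]
    by (intro mult_mono) auto
  also have "\<dots> \<le> real n * (real n * (real k * p^2) * x^(m-2))"
  proof -
    have a: "x - q^k \<le> real k * p^2"
    proof -
      have "1 - q^k \<le> real k * p" using bern_low[OF p0 p1, of k] q_def by simp
      then have "p * (1 - q^k) \<le> p * (real k * p)" using p0 by (intro mult_left_mono) auto
      then show ?thesis using xf by (simp add: power2_eq_square algebra_simps)
    qed
    have b: "0 \<le> x - q^k" using xf by simp
    have c: "real (m-1) * (x - q^k) * x^(m-1-1) \<le> real n * (real k * p^2) * x^(m-2)"
      using a b m_def xf by (intro mult_mono mult_nonneg_nonneg) auto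
    have "real m * 1 * (real (m-1) * (x - q^k) * x^(m-1-1)) \<le> real n * (real (m-1) * (x - q^k) * x^(m-1-1))"
      using m_def b xf by (intro mult_right_mono mult_nonneg_nonneg) auto
    also have "\<dots> \<le> real n * (real n * (real k * p^2) * x^(m-2))"
      using c by (intro mult_left_mono) auto
    finally show ?thesis .
  qed
  also have "\<dots> = real k * t^2 * x^(m-2)" by (simp add: t_def power2_eq_square algebra_simps)
  also have "\<dots> \<le> real k * t^2 * (K * exp (- real k * t))"
  proof -
    have xb: "x \<le> exp (- real k * p + 2 * real k ^ 2 * p^2)"
    proof -
      have "x = p + q * q^k" using x_def by simp
      also have "\<dots> \<le> p + q * (1 - real k * p + (real k)^2 * p^2)"
        using bern_up[OF p0 p1, of k] q0 q_def by (intro add_left_mono mult_left_mono) auto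
      also have "\<dots> = 1 - real k * p + (real k)^2 * p^2 + real k * p^2 - (real k)^2 * p^3"
        unfolding q_def by (simp add: algebra_simps power2_eq_square power3_eq_cube)
      also have "\<dots> \<le> 1 + (- real k * p + 2 * real k ^ 2 * p^2)"
      proof -
        have "real k * p^2 \<le> real k ^ 2 * p^2" using k1
          by (intro mult_right_mono) (auto simp: power2_eq_square)
        moreover have "0 \<le> (real k)^2 * p^3" using p0 by simp
        ultimately show ?thesis by linarith
      qed
      also have "\<dots> \<le> exp (- real k * p + 2 * real k ^ 2 * p^2)" by (rule exp_ge_add_one_self)
      finally show ?thesis .
    qed
    have "x^(m-2) \<le> exp (real (m-2) * (- real k * p + 2 * real k ^ 2 * p^2))"
      using xf xb by (intro pow_le_exp) auto
    also have "\<dots> \<le> exp (- real k * t + (real k * (real k + 2) + 2 * real k ^ 2))"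
    proof -
      have rm2: "real (m-2) = real n - real k - 2" using nk m_def by simp
      have e1: "real (m-2) * (- real k * p) = - real k * t + real k * (real k + 2) * p"
        unfolding rm2 t_def by (simp add: algebra_simps)
      have e2: "real k * (real k + 2) * p \<le> real k * (real k + 2)"
        using p1 p0 by (simp add: mult_left_le)
      have e3: "real (m-2) * (2 * real k ^ 2 * p^2) \<le> 2 * real k ^ 2"
      proof -
        have "real (m-2) * (2 * real k ^ 2 * p^2) \<le> real n * (2 * real k ^ 2 * p^2)"
          using rm2 by (intro mult_right_mono) auto
        also have "\<dots> = 2 * real k ^ 2 * (real n * p^2)" by simp
        also have "\<dots> \<le> 2 * real k ^ 2 * 1" using np by (intro mult_left_mono) auto
        finally show ?thesis by simp
      qed
      have "real (m-2) * (- real k * p + 2 * real k ^ 2 * p^2) \<le> - real k * t + (real k * (real k + 2) + 2 * real k ^ 2)"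
      proof -
        have "real (m-2) * (- real k * p + 2 * real k ^ 2 * p^2) = real (m-2) * (- real k * p) + real (m-2) * (2 * real k ^ 2 * p^2)"
          by (rule distrib_left)
        then show ?thesis using e1 e2 e3 by linarith
      qed
      then show ?thesis by simp
    qed
    also have "\<dots> = K * exp (- real k * t)" unfolding K_def by (simp add: exp_add[symmetric] add.commute)
    finally show ?thesis by (intro mult_left_mono) auto
  qed
  finally have T2: "real m * (q^k * x^(m-1) - q^(k*m)) \<le> real k * K * t^2 * exp (- real k * t)" by (simp add: mult_ac)
  have br0: "0 \<le> q^(k*m) + real m * (q^k * x^(m-1) - q^(k*m))"
  proof -
    have "(q^k)^(m-1) \<le> x^(m-1)" using xf qk by (intro power_mono) auto
    then have "q^(k*m) \<le> q^k * x^(m-1)" using qkm qk by (simp add: mult_left_mono)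
    then show ?thesis using q0 by simp
  qed
  have "real (n choose k) * (q^(k*m) + real m * (q^k * x^(m-1) - q^(k*m))) \<le>
        real n ^ k * (q^(k*m) + real m * (q^k * x^(m-1) - q^(k*m)))"
    using br0 binomial_le_pow[of k n] nk by (intro mult_right_mono) (auto simp del: of_nat_power simp: of_nat_power[symmetric])
  also have "\<dots> \<le> real n ^ k * ((exp (real k ^ 2) + real k * K * t^2) * exp (- real k * t))"
    using T1 T2 by (intro mult_left_mono) (auto simp: algebra_simps)
  finally show ?thesis unfolding q_def x_def m_def t_def K_def by (simp add: algebra_simps)
qed


lemma T1_bound:
  fixes p :: real and n k :: nat
  assumes nk: "n \<ge> k" and p0: "0 \<le> p" and p1: "p \<le> 1"
  shows "(1-p)^(k*(n-k)) \<le> exp (real k ^ 2) * exp (- real k * (real n * p))"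
proof -
  have "(1-p)^(k*(n-k)) \<le> exp (real (k*(n-k)) * (-p))"
    using p1 one_minus_le_exp[of p] by (intro pow_le_exp) auto
  also have "real (k*(n-k)) * (-p) = - real k * (real n * p) + real k * real k * p"
  proof -
    have hh: "real (k*(n-k)) = real k * (real n - real k)" using nk by (simp add: of_nat_diff)
    show ?thesis unfolding hh by (simp add: algebra_simps)
  qed
  also have "exp (- real k * (real n * p) + real k * real k * p) \<le> exp (- real k * (real n * p) + real k ^ 2)"
  proof -
    have "real k * real k * p \<le> real k * real k * 1" using p1 by (intro mult_left_mono) auto
    then show ?thesis by (simp add: power2_eq_square)
  qed
  also have "\<dots> = exp (real k ^ 2) * exp (- real k * (real n * p))" by (simp add: exp_add[symmetric] add.commute)
  finally show ?thesis .
qed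

lemma R2:
  fixes p :: real and n k :: nat
  assumes k1: "k \<ge> 1" and nk: "n \<ge> 2 * k + 2" and p0: "1 / sqrt (real n) \<le> p" and p1: "p \<le> 1/2"
  shows "real (n choose k) * ((1-p)^(k*(n-k)) + real (n-k) * ((1-p)^k * (p + (1-p)^(k+1))^(n-k-1) - (1-p)^(k*(n-k))))
     \<le> real n ^ k * (exp (real k ^ 2) * exp (- real k * (real n * p)) + real n * exp (- sqrt (real n) / 4))"
proof -
  define q where "q = 1 - p"
  define x where "x = p + q^(k+1)"
  define m where "m = n - k"
  have n0: "real n > 0" using nk by simp
  have pp: "0 \<le> p" using p0 n0 by (smt (verit) divide_nonneg_nonneg real_sqrt_ge_zero)
  have q0: "0 \<le> q" "q \<le> 1" using pp p1 q_def by auto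
  have qk: "0 \<le> q^k" "q^k \<le> 1" using q0 by (auto intro: power_le_one)
  have xf: "q^k \<le> x" "x \<le> 1" "0 \<le> x"
    using x_facts[OF k1 pp] p1 unfolding x_def q_def by auto
  have qkq: "q^k \<le> q"
  proof -
    have "q^k = q * q^(k-1)" using k1 by (cases k) auto
    also have "\<dots> \<le> q * 1" using q0 by (intro mult_left_mono power_le_one) auto
    finally show ?thesis by simp
  qed
  have T1: "q^(k*m) \<le> exp (real k ^ 2) * exp (- real k * (real n * p))"
    unfolding q_def m_def using T1_bound[of k n p] nk pp p1 by simp
  have xb: "x \<le> exp (- p / 2)"
  proof -
    have "x = p + q * q^k" using x_def by simp
    also have "\<dots> \<le> p + q * q" using qkq q0 by (intro add_left_mono mult_left_mono) auto
    also have "\<dots> = 1 - p + p * p" unfolding q_def by (simp add: algebra_simps)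
    also have "\<dots> \<le> 1 + (- p / 2)"
    proof -
      have "p * p \<le> p * (1/2)" using p1 pp by (intro mult_left_mono) auto
      then show ?thesis by linarith
    qed
    also have "\<dots> \<le> exp (- p / 2)" by (rule exp_ge_add_one_self)
    finally show ?thesis .
  qed
  have "x^(m-1) \<le> exp (real (m-1) * (- p / 2))" using xf xb by (intro pow_le_exp) auto
  also have "\<dots> \<le> exp (- sqrt (real n) / 4)"
  proof -
    have rm: "real (m-1) \<ge> real n / 2" using nk m_def by simp
    have sq: "sqrt (real n) * sqrt (real n) = real n" using n0 by simp
    have sp: "sqrt (real n) > 0" using n0 by simp
    have "p * sqrt (real n) \<ge> 1" using p0 sp by (simp add: field_simps)
    have h1: "real (m-1) * p \<ge> real n / 2 * p" using rm pp by (intro mult_right_mono) auto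
    have h2: "real n / 2 * p = (sqrt (real n) * (p * sqrt (real n))) / 2"
    proof -
      have "sqrt (real n) * (p * sqrt (real n)) = p * (sqrt (real n) * sqrt (real n))" by (simp add: algebra_simps)
      then show ?thesis using sq by simp
    qed
    have h3: "sqrt (real n) * (p * sqrt (real n)) \<ge> sqrt (real n) * 1"
      using \<open>p * sqrt (real n) \<ge> 1\<close> sp by (intro mult_left_mono) auto
    have "real (m-1) * p \<ge> sqrt (real n) / 2" using h1 h2 h3 by linarith
    then show ?thesis by simp
  qed
  finally have xm: "x^(m-1) \<le> exp (- sqrt (real n) / 4)" .
  have T2: "real m * (q^k * x^(m-1) - q^(k*m)) \<le> real n * exp (- sqrt (real n) / 4)"
  proof -
    have "real m * (q^k * x^(m-1) - q^(k*m)) \<le> real m * (1 * x^(m-1))"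
    proof (rule mult_left_mono)
      have "q^k * x^(m-1) \<le> 1 * x^(m-1)" using qk xf by (intro mult_right_mono) auto
      moreover have "0 \<le> q^(k*m)" using q0 by simp
      ultimately show "q^k * x^(m-1) - q^(k*m) \<le> 1 * x^(m-1)" by linarith
    qed simp
    also have "\<dots> \<le> real n * exp (- sqrt (real n) / 4)"
      using xm m_def xf by (intro mult_mono) auto
    finally show ?thesis .
  qed
  have br0: "0 \<le> q^(k*m) + real m * (q^k * x^(m-1) - q^(k*m))"
  proof -
    have qkm: "q^(k*m) = q^k * (q^k)^(m-1)"
    proof -
      have "m \<ge> 1" using nk m_def by simp
      then obtain j where j: "m = Suc j" by (cases m) auto
      then have "k * m = k + k * (m - 1)" by simp
      then show ?thesis by (simp add: power_add power_mult)
    qed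
    have "(q^k)^(m-1) \<le> x^(m-1)" using xf qk by (intro power_mono) auto
    then have "q^(k*m) \<le> q^k * x^(m-1)" using qkm qk by (simp add: mult_left_mono)
    then show ?thesis using q0 by simp
  qed
  have "real (n choose k) * (q^(k*m) + real m * (q^k * x^(m-1) - q^(k*m))) \<le>
        real n ^ k * (q^(k*m) + real m * (q^k * x^(m-1) - q^(k*m)))"
    using br0 binomial_le_pow[of k n] nk by (intro mult_right_mono) (auto simp del: of_nat_power simp: of_nat_power[symmetric])
  also have "\<dots> \<le> real n ^ k * (exp (real k ^ 2) * exp (- real k * (real n * p)) + real n * exp (- sqrt (real n) / 4))"
    using T1 T2 by (intro mult_left_mono) (auto simp: algebra_simps)
  finally show ?thesis unfolding q_def x_def m_def by (simp add: algebra_simps)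
qed

lemma R3:
  fixes p :: real and n k :: nat
  assumes k1: "k \<ge> 1" and nk: "n \<ge> k + 2" and p0: "1/2 \<le> p" and p1: "p \<le> 1"
  shows "real (n choose k) * (real (n - k) * (real (n - k - 1) *
      ((1-p) ^ k * (1-p) ^ (k+1) * (p + (1-p) ^ (k+1)) ^ (n - k - 2))))
    \<le> exp (real k + 2) * (real n * (1-p))^(2*k+1) * exp (- (real n * (1-p)) / 2) / real n ^ (k-1)"
proof -
  define q where "q = 1 - p"
  define x where "x = p + q^(k+1)"
  define m where "m = n - k"
  have n0: "real n > 0" using nk by simp
  have q0: "0 \<le> q" "q \<le> 1/2" using p0 p1 q_def by auto
  have qk: "0 \<le> q^k" "q^k \<le> 1" using q0 by (auto intro: power_le_one)
  have xf: "q^k \<le> x" "x \<le> 1" "0 \<le> x"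
    using x_facts[OF k1] p0 p1 unfolding x_def q_def by auto
  have qkq: "q^k \<le> q"
  proof -
    have "q^k = q * q^(k-1)" using k1 by (cases k) auto
    also have "\<dots> \<le> q * 1" using q0 by (intro mult_left_mono power_le_one) auto
    finally show ?thesis by simp
  qed
  have xb: "x \<le> exp (- q / 2)"
  proof -
    have "x = p + q * q^k" using x_def by simp
    also have "\<dots> \<le> p + q * (1/2)" using qkq q0 by (intro add_left_mono mult_left_mono) auto
    also have "\<dots> = 1 + (- q / 2)" unfolding q_def by argo
    also have "\<dots> \<le> exp (- q / 2)" by (rule exp_ge_add_one_self)
    finally show ?thesis .
  qed
  have "x^(m-2) \<le> exp (real (m-2) * (- q / 2))" using xf xb by (intro pow_le_exp) auto
  also have "\<dots> \<le> exp (real k + 2) * exp (- (real n * q) / 2)"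
  proof -
    have rm: "real (m-2) = real n - real k - 2" using nk m_def by simp
    have "real (m-2) * (- q / 2) = - (real n * q) / 2 + (real k + 2) * q / 2" unfolding rm by (simp add: algebra_simps)
    also have "\<dots> \<le> - (real n * q) / 2 + (real k + 2)"
    proof -
      have "(real k + 2) * q \<le> real k + 2" using q0 by (intro mult_left_le) auto
      then have "(real k + 2) * q / 2 \<le> (real k + 2) / 2" by (rule divide_right_mono) auto
      moreover have "(real k + 2) / 2 \<le> real k + 2" by simp
      ultimately show ?thesis by linarith
    qed
    finally show ?thesis by (simp add: exp_add[symmetric] add.commute)
  qed
  finally have xm: "x^(m-2) \<le> exp (real k + 2) * exp (- (real n * q) / 2)" .
  have "real (n choose k) * (real m * (real (m-1) * (q^k * q^(k+1) * x^(m-2))))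
      \<le> real n ^ k * (real n * (real n * (q^k * q^(k+1) * x^(m-2))))"
    using binomial_le_pow[of k n] nk m_def qk q0 xf
    by (intro mult_mono mult_nonneg_nonneg) (auto simp del: of_nat_power simp: of_nat_power[symmetric])
  also have "\<dots> = real n ^ (k+2) * q^(2*k+1) * x^(m-2)"
  proof -
    have "2*k+1 = k + (k+1)" by simp
    then have h1: "q^(2*k+1) = q^k * q^(k+1)" by (metis power_add)
    have h2: "real n ^ (k+2) = real n ^ k * (real n * real n)" by (simp add: power_add power2_eq_square)
    show ?thesis unfolding h1 h2 by (simp only: mult_ac)
  qed
  also have "\<dots> \<le> real n ^ (k+2) * q^(2*k+1) * (exp (real k + 2) * exp (- (real n * q) / 2))"
    using xm q0 by (intro mult_left_mono) auto
  also have "real n ^ (k+2) * q^(2*k+1) = (real n * q)^(2*k+1) / real n ^ (k-1)"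
  proof -
    have "2*k+1 = (k+2) + (k-1)" using k1 by simp
    then have "real n ^ (2*k+1) = real n ^ (k+2) * real n ^ (k-1)" by (metis power_add)
    then show ?thesis using n0 by (simp add: power_mult_distrib field_simps)
  qed
  finally show ?thesis unfolding q_def x_def m_def by (simp add: algebra_simps)
qed


lemma mono_t2:
  fixes a b :: real
  assumes k1: "k \<ge> 1" and a2: "2 / real k \<le> a" and ab: "a \<le> b"
  shows "b^2 * exp (- real k * b) \<le> a^2 * exp (- real k * a)"
proof -
  have kp: "real k > 0" using k1 by simp
  have a0: "a > 0" using a2 kp by (smt (verit) divide_pos_pos)
  have "b / a = 1 + (b - a) / a" using a0 by (simp add: field_simps)
  also have "\<dots> \<le> exp ((b - a) / a)" by (rule exp_ge_add_one_self)
  finally have r: "b / a \<le> exp ((b - a) / a)" .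
  have b0: "0 \<le> b / a" using a0 ab by simp
  have "(b / a)^2 \<le> exp ((b - a) / a)^2" using r b0 by (intro power_mono) auto
  also have "\<dots> = exp (2 * ((b - a) / a))" by (simp add: exp_of_nat_mult[symmetric])
  also have "\<dots> \<le> exp (real k * (b - a))"
  proof -
    have "2 / a \<le> real k" using a2 a0 kp by (simp add: field_simps)
    then have "(2 / a) * (b - a) \<le> real k * (b - a)" using ab by (intro mult_right_mono) auto
    then show ?thesis by simp
  qed
  finally have "(b/a)^2 \<le> exp (real k * (b - a))" .
  then have "b^2 \<le> a^2 * exp (real k * (b - a))" using a0 by (simp add: field_simps power_divide)
  then have "b^2 * exp (- real k * b) \<le> a^2 * exp (real k * (b - a)) * exp (- real k * b)"
    by (intro mult_right_mono) auto
  also have "\<dots> = a^2 * exp (- real k * a)" by (simp add: mult.assoc exp_add[symmetric] algebra_simps)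
  finally show ?thesis .
qed

lemma thresh:
  fixes t w c1 c2 :: real and n k :: nat
  assumes k1: "k \<ge> 1" and n8: "n \<ge> 9" and w0: "0 \<le> w" and c1: "0 \<le> c1" and c2: "0 \<le> c2"
    and t: "ln (real n) + (2 / real k) * ln (ln (real n)) + w \<le> t"
  shows "real n ^ k * ((c1 + c2 * t^2) * exp (- real k * t)) \<le> (c1 + c2 * (3 + w)^2) * exp (- w)"
proof -
  define L where "L = ln (real n)"
  define t0 where "t0 = L + (2 / real k) * ln L + w"
  have kp: "real k > 0" using k1 by simp
  have L2: "L \<ge> 2"
  proof -
    have "exp 2 \<le> (9::real)"
    proof -
      have "exp (1::real) \<le> 3" using exp_le by simp
      then have "exp (1::real) * exp 1 \<le> 3 * 3" by (intro mult_mono) auto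
      then show ?thesis by (simp add: exp_add[symmetric])
    qed
    then have "exp 2 \<le> real n" using n8 by simp
    then show ?thesis unfolding L_def using ln_ge_iff[of "real n" 2] n8 by simp
  qed
  have lnL0: "0 \<le> ln L" using L2 by simp
  have lnLL: "ln L \<le> L" using L2 ln_le_minus_one[of L] by simp
  have t0t: "t0 \<le> t" using t unfolding t0_def L_def by simp
  have t0L: "t0 \<ge> 2 / real k"
  proof -
    have "2 / real k \<le> 2" using k1 by (simp add: field_simps)
    moreover have "0 \<le> (2 / real k) * ln L" using lnL0 kp by simp
    ultimately show ?thesis unfolding t0_def using L2 w0 by linarith
  qed
  have key: "real n ^ k * exp (- real k * t0) = exp (- real k * w) / L^2"
  proof -
    have n0: "real n > 0" using n8 by simp
    have "exp (real k * L) = exp L ^ k" by (rule exp_of_nat_mult)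
    then have "real n ^ k = exp (real k * L)" unfolding L_def using n0 by simp
    moreover have "exp (real 2 * ln L) = exp (ln L) ^ 2" by (rule exp_of_nat_mult)
    then have "L^2 = exp (2 * ln L)" using L2 by simp
    moreover have "real k * L + - real k * t0 = - (2 * ln L) + - real k * w"
      unfolding t0_def using kp by (simp add: algebra_simps)
    ultimately show ?thesis by (simp add: exp_add[symmetric] exp_minus field_simps)
  qed
  have "real n ^ k * ((c1 + c2 * t^2) * exp (- real k * t)) = real n ^ k * (c1 * exp (- real k * t) + c2 * (t^2 * exp (- real k * t)))"
    by (simp add: algebra_simps)
  also have "\<dots> \<le> real n ^ k * (c1 * exp (- real k * t0) + c2 * (t0^2 * exp (- real k * t0)))"
    using mono_t2[OF k1 t0L t0t] t0t kp c1 c2 by (intro mult_left_mono add_mono) auto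
  also have "\<dots> = (c1 + c2 * t0^2) * (real n ^ k * exp (- real k * t0))" by (simp add: algebra_simps)
  also have "\<dots> = (c1 / L^2 + c2 * (t0 / L)^2) * exp (- real k * w)"
    unfolding key using L2 by (simp add: field_simps power_divide)
  also have "\<dots> \<le> (c1 + c2 * (3 + w)^2) * exp (- w)"
  proof -
    have A: "c1 / L^2 \<le> c1" using L2 c1 by (simp add: divide_le_eq power2_eq_square) (smt (verit) mult_le_cancel_left1 mult_nonneg_nonneg)
    have "t0 \<le> L * (3 + w)"
    proof -
      have "(2 / real k) * ln L \<le> 2 * L"
      proof -
        have "2 / real k \<le> 2" using k1 by (simp add: field_simps)
        then have "(2 / real k) * ln L \<le> 2 * ln L" using lnL0 by (intro mult_right_mono) auto
        then show ?thesis using lnLL by linarith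
      qed
      moreover have "w \<le> L * w" using L2 w0 by (simp add: mult_le_cancel_right1)
      ultimately show ?thesis unfolding t0_def by (simp add: algebra_simps)
    qed
    moreover have "0 \<le> t0" using t0L kp by (smt (verit) divide_nonneg_nonneg of_nat_0_le_iff)
    ultimately have "t0 / L \<le> 3 + w" "0 \<le> t0 / L" using L2 by (auto simp: field_simps)
    then have B: "c2 * (t0 / L)^2 \<le> c2 * (3 + w)^2" using c2 by (intro mult_left_mono power_mono) auto
    have C: "exp (- real k * w) \<le> exp (- w)" using k1 w0 by (simp add: mult_le_cancel_right1)
    have "0 \<le> c1 / L^2 + c2 * (t0 / L)^2" using c1 c2 by simp
    moreover have "0 \<le> c1 + c2 * (3 + w)^2" using c1 c2 by simp
    ultimately show ?thesis using A B C by (intro mult_mono) auto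
  qed
  finally show ?thesis .
qed


lemma lim_a1: "((\<lambda>w::real. (3 + w)^2 * exp (- w)) \<longlongrightarrow> 0) at_top" by real_asymp
lemma lim_a2: "((\<lambda>w::real. exp (- w)) \<longlongrightarrow> 0) at_top" by real_asymp
lemma lim_c2: "(\<lambda>n::nat. exp (- sqrt (real n) / 8)) \<longlonglongrightarrow> 0" by real_asymp
lemma lim_c3: "((\<lambda>u::real. u^3 * exp (- u / 2)) \<longlongrightarrow> 0) at_top" by real_asymp
lemma lim_inv: "(\<lambda>n::nat. 1 / real n) \<longlonglongrightarrow> 0" by real_asymp

lemma compl_prob:
  "gnp_prob n p (\<lambda>E. \<not> X E) = 1 - gnp_prob n p X"
proof -
  have "gnp_prob n p (\<lambda>E. \<not> X E) = mu p (all_edges n) (\<lambda>E. True \<and> \<not> X E)" by (simp add: gnp_mu)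
  also have "\<dots> = mu p (all_edges n) (\<lambda>_. True) - mu p (all_edges n) (\<lambda>E. True \<and> X E)"
    by (rule mu_diff[OF finite_all_edges])
  also have "\<dots> = 1 - gnp_prob n p X" by (simp add: mu_true finite_all_edges gnp_mu)
  finally show ?thesis .
qed

theorem proposition3p1:
  fixes p :: "nat \<Rightarrow> real" and k :: nat and \<omega> :: "nat \<Rightarrow> real"
  assumes "k \<ge> 1"
    and "\<And>n. 0 \<le> p n \<and> p n \<le> 1"
    and "filterlim \<omega> at_top sequentially"
    and "\<forall>\<^sub>F n in sequentially.
           p n \<ge> (ln (real n) + (2 / real k) * ln (ln (real n)) + \<omega> n) / real n"
    and "k \<ge> 2 \<or> ((\<lambda>n. real n * (1 - p n)) \<longlonglongrightarrow> 0)
           \<or> filterlim (\<lambda>n. real n * (1 - p n)) at_top sequentially"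
  shows "(\<lambda>n. gnp_prob n (p n) (\<lambda>E. \<not> (\<exists>a S. star_k_separation n k E a S)))
           \<longlonglongrightarrow> 1"
proof -
  note k1 = assms(1) and pr = assms(2) and om = assms(3) and hyp = assms(4) and alt = assms(5)
  define P where "P n = gnp_prob n (p n) (\<lambda>E. \<exists>a S. star_k_separation n k E a S)" for n
  define K where "K = exp (real k * (real k + 2) + 2 * real k ^ 2)"
  define c1 where "c1 = exp (real k ^ 2)"
  define c2 where "c2 = real k * K"
  define A where "A w = (c1 + c2 * (3 + w)^2) * exp (- w)" for w
  define d2 where "d2 n = real n ^ (k+1) * exp (- sqrt (real n) / 4)" for n :: nat
  define d3 where "d3 n = exp (real k + 2) * (real n * (1 - p n))^(2*k+1) * exp (- (real n * (1 - p n)) / 2) / real n ^ (k-1)" for n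
  define D where "D n = A (\<omega> n) + d2 n + d3 n" for n
  have c10: "0 \<le> c1" unfolding c1_def by simp
  have c20: "0 \<le> c2" unfolding c2_def K_def by simp
  have A0: "0 \<le> A w" if "0 \<le> w" for w unfolding A_def using c10 c20 by simp
  have d20: "0 \<le> d2 n" for n unfolding d2_def by simp
  have d30: "0 \<le> d3 n" for n unfolding d3_def using pr[of n] by simp
  have P0: "0 \<le> P n" for n unfolding P_def gnp_mu using pr[of n] by (intro mu_nonneg) auto
  have evom: "\<forall>\<^sub>F n in sequentially. 0 \<le> \<omega> n"
    using om by (simp add: filterlim_at_top)
  have evb: "\<forall>\<^sub>F n in sequentially. P n \<le> D n"
    using hyp evom eventually_ge_at_top[of "2 * k + 9"]
  proof eventually_elim
    case (elim n)
    then have hp: "(ln (real n) + 2 / real k * ln (ln (real n)) + \<omega> n) / real n \<le> p n"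
      and w0: "0 \<le> \<omega> n" and nb: "2 * k + 9 \<le> n" by auto
    have n0: "real n > 0" using nb by simp
    define t where "t = real n * p n"
    have tt: "ln (real n) + 2 / real k * ln (ln (real n)) + \<omega> n \<le> t"
      using hp n0 unfolding t_def by (simp add: pos_divide_le_eq mult.commute)
    have p0: "0 \<le> p n" "p n \<le> 1" using pr[of n] by auto
    have TH: "real n ^ k * ((c1 + c2 * t^2) * exp (- real k * t)) \<le> A (\<omega> n)"
      unfolding A_def using thresh[OF k1 _ w0 c10 c20 tt] nb by simp
    show "P n \<le> D n"
    proof (cases "1/2 \<le> p n")
      case True
      have "P n \<le> d3 n" unfolding P_def d3_def
        using bound2[OF p0, of n k] R3[OF k1 _ True p0(2), of n] nb by linarith
      then show ?thesis unfolding D_def using A0[OF w0] d20[of n] by linarith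
    next
      case False
      then have ph: "p n \<le> 1/2" by simp
      show ?thesis
      proof (cases "real n * (p n)^2 \<le> 1")
        case True
        have "P n \<le> real n ^ k * ((c1 + c2 * t^2) * exp (- real k * t))"
          unfolding P_def c1_def c2_def K_def t_def
          using bound1[OF p0, of n k] R1[OF k1 _ p0 True] nb by linarith
        then show ?thesis unfolding D_def using TH d20[of n] d30[of n] by linarith
      next
        case False
        have sq: "1 / sqrt (real n) \<le> p n"
        proof -
          have "1 \<le> sqrt (real n * (p n)^2)" using False by simp
          also have "\<dots> = sqrt (real n) * p n" using p0 by (simp add: real_sqrt_mult)
          finally show ?thesis using n0 by (simp add: divide_le_eq mult.commute)
        qed
        have "P n \<le> real n ^ k * (c1 * exp (- real k * t) + real n * exp (- sqrt (real n) / 4))"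
          unfolding P_def c1_def t_def
          using bound1[OF p0, of n k] R2[OF k1 _ sq ph] nb by linarith
        also have "\<dots> = real n ^ k * (c1 * exp (- real k * t)) + d2 n"
          unfolding d2_def by (simp add: algebra_simps)
        also have "real n ^ k * (c1 * exp (- real k * t)) \<le> real n ^ k * ((c1 + c2 * t^2) * exp (- real k * t))"
          using c20 by (intro mult_left_mono mult_right_mono) auto
        finally show ?thesis unfolding D_def using TH d30[of n] by linarith
      qed
    qed
  qed
  have limA: "(\<lambda>n. A (\<omega> n)) \<longlonglongrightarrow> 0"
  proof -
    have "((\<lambda>w. c1 * exp (- w) + c2 * ((3 + w)^2 * exp (- w))) \<longlongrightarrow> c1 * 0 + c2 * 0) at_top"
      by (intro tendsto_intros lim_a1 lim_a2)
    then have "(A \<longlongrightarrow> 0) at_top" unfolding A_def by (simp add: algebra_simps)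
    then show ?thesis using filterlim_compose[OF _ om] by blast
  qed
  have limd2: "d2 \<longlonglongrightarrow> 0"
  proof (rule tendsto_sandwich[of "\<lambda>_. 0" _ _ "\<lambda>n. (real (2*k+2) / (1/8)) ^ (2*k+2) * exp (- sqrt (real n) / 8)"])
    show "\<forall>\<^sub>F n in sequentially. 0 \<le> d2 n" using d20 by simp
    show "\<forall>\<^sub>F n in sequentially. d2 n \<le> (real (2*k+2) / (1/8)) ^ (2*k+2) * exp (- sqrt (real n) / 8)"
    proof (rule always_eventually, rule allI)
      fix n :: nat
      have u: "sqrt (real n) ^ (2*k+2) \<le> (real (2*k+2) / (1/8)) ^ (2*k+2) * exp ((1/8) * sqrt (real n))"
        by (rule upow_bound) auto
      have "sqrt (real n) ^ (2*k+2) = real n ^ (k+1)"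
      proof -
        have e: "2*k+2 = 2*(k+1)" by simp
        have "sqrt (real n) ^ (2*k+2) = (sqrt (real n) ^ 2) ^ (k+1)" by (simp only: e power_mult)
        then show ?thesis by simp
      qed
      then have "d2 n \<le> (real (2*k+2) / (1/8)) ^ (2*k+2) * exp ((1/8) * sqrt (real n)) * exp (- sqrt (real n) / 4)"
        unfolding d2_def using u by (intro mult_right_mono) auto
      also have "\<dots> = (real (2*k+2) / (1/8)) ^ (2*k+2) * exp (- sqrt (real n) / 8)"
        by (simp add: mult.assoc exp_add[symmetric])
      finally show "d2 n \<le> (real (2*k+2) / (1/8)) ^ (2*k+2) * exp (- sqrt (real n) / 8)" .
    qed
    show "(\<lambda>n. (real (2*k+2) / (1/8)) ^ (2*k+2) * exp (- sqrt (real n) / 8)) \<longlonglongrightarrow> 0"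
      using tendsto_mult[OF tendsto_const lim_c2] by simp
  qed simp
  have limd3: "d3 \<longlonglongrightarrow> 0"
  proof (cases "k \<ge> 2")
    case True
    define M where "M = exp (real k + 2) * (real (2*k+1) / (1/2)) ^ (2*k+1)"
    show ?thesis
    proof (rule tendsto_sandwich[of "\<lambda>_. 0" _ _ "\<lambda>n. M * (1 / real n)"])
      show "\<forall>\<^sub>F n in sequentially. 0 \<le> d3 n" using d30 by simp
      show "\<forall>\<^sub>F n in sequentially. d3 n \<le> M * (1 / real n)"
        using eventually_ge_at_top[of 1]
      proof eventually_elim
        case (elim n)
        define u where "u = real n * (1 - p n)"
        have u0: "0 \<le> u" unfolding u_def using pr[of n] by simp
        have ub: "u ^ (2*k+1) \<le> (real (2*k+1) / (1/2)) ^ (2*k+1) * exp ((1/2) * u)"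
          by (rule upow_bound) (use u0 in auto)
        have "u ^ (2*k+1) * exp (- u / 2) \<le> (real (2*k+1) / (1/2)) ^ (2*k+1) * exp ((1/2) * u) * exp (- u / 2)"
          using ub by (intro mult_right_mono) auto
        also have "\<dots> = (real (2*k+1) / (1/2)) ^ (2*k+1)" by (simp add: mult.assoc exp_add[symmetric])
        finally have h1: "u ^ (2*k+1) * exp (- u / 2) \<le> (real (2*k+1) / (1/2)) ^ (2*k+1)" .
        have n1: "real n \<ge> 1" using elim by simp
        have h2: "real n \<le> real n ^ (k-1)"
        proof -
          have "real n ^ 1 \<le> real n ^ (k-1)" using n1 True by (intro power_increasing) auto
          then show ?thesis by simp
        qed
        have "d3 n = exp (real k + 2) * (u ^ (2*k+1) * exp (- u / 2)) / real n ^ (k-1)"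
          unfolding d3_def u_def by (simp add: algebra_simps)
        also have "\<dots> \<le> M / real n ^ (k-1)"
          unfolding M_def using h1 n1 by (intro divide_right_mono mult_left_mono) auto
        also have "\<dots> \<le> M / real n"
          unfolding M_def using h2 n1 by (intro divide_left_mono) auto
        finally show "d3 n \<le> M * (1 / real n)" by simp
      qed
      show "(\<lambda>n. M * (1 / real n)) \<longlonglongrightarrow> 0" using tendsto_mult[OF tendsto_const lim_inv] by simp
    qed simp
  next
    case False
    then have k1': "k = 1" using k1 by simp
    have d3e: "d3 = (\<lambda>n. exp 3 * ((\<lambda>u. u^3 * exp (- u / 2)) (real n * (1 - p n))))"
      unfolding d3_def k1' by (auto simp: fun_eq_iff numeral_3_eq_3 algebra_simps)
    have alt': "((\<lambda>n. real n * (1 - p n)) \<longlonglongrightarrow> 0) \<or> filterlim (\<lambda>n. real n * (1 - p n)) at_top sequentially"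
      using alt False by auto
    have "(\<lambda>n. (\<lambda>u. u^3 * exp (- u / 2)) (real n * (1 - p n))) \<longlonglongrightarrow> 0"
      using alt'
    proof
      assume l0: "(\<lambda>n. real n * (1 - p n)) \<longlonglongrightarrow> 0"
      have "(\<lambda>n. (real n * (1 - p n))^3 * exp (- (real n * (1 - p n)) / 2)) \<longlonglongrightarrow> 0^3 * exp (- 0 / 2)"
        by (intro tendsto_intros l0) auto
      then show ?thesis by simp
    next
      assume "filterlim (\<lambda>n. real n * (1 - p n)) at_top sequentially"
      then show ?thesis using filterlim_compose[OF lim_c3] by blast
    qed
    then show ?thesis unfolding d3e using tendsto_mult[OF tendsto_const, of _ 0 _ "exp 3"] by simp
  qed
  have limD: "D \<longlonglongrightarrow> 0"
    unfolding D_def using tendsto_add[OF tendsto_add[OF limA limd2] limd3] by simp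
  have limP: "P \<longlonglongrightarrow> 0"
    by (rule tendsto_sandwich[of "\<lambda>_. 0" _ _ D]) (use P0 evb limD in auto)
  have "(\<lambda>n. 1 - P n) \<longlonglongrightarrow> 1 - 0" by (intro tendsto_intros limP)
  moreover have "gnp_prob n (p n) (\<lambda>E. \<not> (\<exists>a S. star_k_separation n k E a S)) = 1 - P n" for n
    unfolding P_def by (rule compl_prob)
  ultimately show ?thesis by simp
qed

end
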